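(* Let $\xi=(\tau_L,\delta_L,\tau_R,\delta_R)\in\Phi$. If $\lambda_L^s+|\lambda_R^s|<1$ then $U_2>V_2$, where $U=(U_1,U_2)$ and $V=(V_1,V_2)$ are the points defined below.
   Context: For $\xi=(\tau_L,\delta_L,\tau_R,\delta_R)\in\mathbb{R}^4$ define $f_\xi:\mathbb{R}^2\to\mathbb{R}^2$ by $f_\xi(x,y)=(\tau_L x+y+1,\,-\delta_L x)$ if $x\le 0$ and $f_\xi(x,y)=(\tau_R x+y+1,\,-\delta_R x)$ if $x\ge 0$. Let $\Phi=\{\xi\in\mathbb{R}^4: \tau_L>\delta_L+1,\ \delta_L>0,\ \tau_R<-(\delta_R+1),\ \delta_R>0\}$. For $\xi\in\Phi$, the matrix $\begin{bmatrix}\tau_L&1\\-\delta_L&0\end{bmatrix}$ has real eigenvalues $0<\lambda_L^s<1<\lambda_L^u$ and $\begin{bmatrix}\tau_R&1\\-\delta_R&0\end{bmatrix}$ has real eigenvalues $\lambda_R^u<-1<\lambda_R^s<0$. Let $D=\left(\frac{1}{1-\lambda_L^s},0\right)$; for $\xi\in\Phi$, $D$ lies in $x>0$ and $f_\xi(D)$ lies in $x<0$. Let $U$ be the point where the line segment from $D$ to $f_\xi(D)$ meets the $y$-axis, and let $V=\left(0,\frac{-\lambda_R^u}{\lambda_R^u-1}\right)$. *)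

theory Defs
  imports "HOL-Analysis.Analysis"
begin

definition bcnf :: "real \<times> real \<times> real \<times> real \<Rightarrow> real \<times> real \<Rightarrow> real \<times> real" where
  "bcnf xi p = (case xi of (tL, dL, tR, dR) \<Rightarrow> case p of (x, y) \<Rightarrow>
     (if x \<le> 0 then (tL * x + y + 1, - dL * x) else (tR * x + y + 1, - dR * x)))"

definition Phi :: "(real \<times> real \<times> real \<times> real) set" where
  "Phi = {(tL, dL, tR, dR). tL > dL + 1 \<and> dL > 0 \<and> tR < - (dR + 1) \<and> dR > 0}"

text \<open>Characteristic polynomial of the matrix [[tau, 1], [-delta, 0]]:
  det(lambda I - A) = lambda^2 - tau lambda + delta.\<close>
definition is_eig :: "real \<Rightarrow> real \<Rightarrow> real \<Rightarrow> bool" where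
  "is_eig tau delta lam \<longleftrightarrow> lam^2 - tau * lam + delta = 0"

definition lamLs :: "real \<times> real \<times> real \<times> real \<Rightarrow> real" where
  "lamLs xi = (case xi of (tL, dL, tR, dR) \<Rightarrow> THE l. is_eig tL dL l \<and> 0 < l \<and> l < 1)"

definition lamRs :: "real \<times> real \<times> real \<times> real \<Rightarrow> real" where
  "lamRs xi = (case xi of (tL, dL, tR, dR) \<Rightarrow> THE l. is_eig tR dR l \<and> -1 < l \<and> l < 0)"

definition lamRu :: "real \<times> real \<times> real \<times> real \<Rightarrow> real" where
  "lamRu xi = (case xi of (tL, dL, tR, dR) \<Rightarrow> THE l. is_eig tR dR l \<and> l < -1)"

definition ptD :: "real \<times> real \<times> real \<times> real \<Rightarrow> real \<times> real" where
  "ptD xi = (1 / (1 - lamLs xi), 0)"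

definition ptU :: "real \<times> real \<times> real \<times> real \<Rightarrow> real \<times> real" where
  "ptU xi = (THE p. p \<in> closed_segment (ptD xi) (bcnf xi (ptD xi)) \<and> fst p = 0)"

definition ptV :: "real \<times> real \<times> real \<times> real \<Rightarrow> real \<times> real" where
  "ptV xi = (0, - lamRu xi / (lamRu xi - 1))"

end

theory Submission
  imports Defs
begin

lemma sq_lt: "(x::real)^2 < y^2 \<Longrightarrow> 0 \<le> y \<Longrightarrow> x < y"
  by (meson abs_le_square_iff not_less power2_abs abs_ge_self order_le_less_trans abs_less_iff power_less_imp_less_base abs_ge_zero)

lemma roots_sum:
  assumes "is_eig t d l1" "is_eig t d l2" "l1 \<noteq> l2"
  shows "t = l1 + l2 \<and> d = l1 * l2"
proof -
  have "(l1 - l2) * (l1 + l2 - t) = 0" using assms unfolding is_eig_def by (simp add: algebra_simps power2_eq_square)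
  hence "t = l1 + l2" using assms(3) by simp
  thus ?thesis using assms(1) unfolding is_eig_def by (simp add: algebra_simps power2_eq_square)
qed

lemma prod_help: "t = a + b \<Longrightarrow> d = a*b \<Longrightarrow> (1-a)*(1-b) = 1 - t + (d::real)"
  "t = a + b \<Longrightarrow> d = a*b \<Longrightarrow> (1+a)*(1+b) = 1 + t + (d::real)"
  by (simp_all add: algebra_simps)

lemma L_ex:
  assumes "tL > dL + 1" "dL > 0"
  shows "\<exists>!l. is_eig tL dL l \<and> 0 < l \<and> l < 1"
proof
  define r where "r = sqrt (tL^2 - 4*dL)"
  have "(dL+1)^2 < tL^2" using assms by (intro power_strict_mono) auto
  moreover have "(dL-1)^2 \<ge> 0" by simp
  ultimately have disc: "tL^2 - 4*dL > 0" by (simp add: power2_eq_square algebra_simps)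
  have r2: "r^2 = tL^2 - 4*dL" unfolding r_def using disc by (intro real_sqrt_pow2) linarith
  have r0: "r \<ge> 0" unfolding r_def using disc by simp
  have a1: "r < tL" using sq_lt[of r tL] r2 assms by (smt (verit))
  have a2: "tL - 2 < r"
  proof (cases "tL - 2 < 0")
    case True then show ?thesis using r0 by simp
  next
    case False
    have "(tL-2)^2 < r^2" using r2 assms by (simp add: power2_eq_square algebra_simps)
    then show ?thesis using sq_lt r0 by blast
  qed
  show "is_eig tL dL ((tL - r)/2) \<and> 0 < (tL - r)/2 \<and> (tL - r)/2 < 1"
    using a1 a2 r2 unfolding is_eig_def by (simp add: power2_eq_square field_simps)
  fix l assume l: "is_eig tL dL l \<and> 0 < l \<and> l < 1"
  show "l = (tL - r)/2"
  proof (rule ccontr)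
    assume ne: "l \<noteq> (tL - r)/2"
    have e: "is_eig tL dL ((tL - r)/2) \<and> 0 < (tL - r)/2 \<and> (tL - r)/2 < 1"
      using a1 a2 r2 unfolding is_eig_def by (simp add: power2_eq_square field_simps)
    from roots_sum[of tL dL l "(tL - r)/2"] l e ne
    have "tL = l + (tL-r)/2 \<and> dL = l * ((tL-r)/2)" by blast
    hence "(1 - l) * (1 - (tL-r)/2) = 1 - tL + dL" by (intro prod_help(1)) auto
    moreover have "(1 - l) * (1 - (tL-r)/2) > 0" using l e by simp
    ultimately show False using assms by linarith
  qed
qed

lemma R_ex:
  assumes "tR < -(dR + 1)" "dR > 0"
  shows "\<exists>!l. is_eig tR dR l \<and> -1 < l \<and> l < 0"
    and "\<exists>!l. is_eig tR dR l \<and> l < -1"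
proof -
  define r where "r = sqrt (tR^2 - 4*dR)"
  have "(dR+1)^2 < (-tR)^2" using assms by (intro power_strict_mono) auto
  moreover have "(dR-1)^2 \<ge> 0" by simp
  ultimately have disc: "tR^2 - 4*dR > 0" by (simp add: power2_eq_square algebra_simps)
  have r2: "r^2 = tR^2 - 4*dR" unfolding r_def using disc by (intro real_sqrt_pow2) linarith
  have r0: "r \<ge> 0" unfolding r_def using disc by simp
  have a1: "r < -tR" using sq_lt[of r "-tR"] r2 assms by (simp add: power2_eq_square)
  have a2: "-2 - tR < r"
  proof (cases "-2 - tR < 0")
    case True then show ?thesis using r0 by simp
  next
    case False
    have "(-2 - tR)^2 < r^2" using r2 assms by (simp add: power2_eq_square algebra_simps)
    then show ?thesis using sq_lt r0 by blast
  qed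
  have a3: "tR + 2 < r"
  proof (cases "tR + 2 < 0")
    case True then show ?thesis using r0 by simp
  next
    case False
    have "(tR + 2)^2 < r^2" using r2 assms by (simp add: power2_eq_square algebra_simps)
    then show ?thesis using sq_lt r0 by blast
  qed
  have es: "is_eig tR dR ((tR + r)/2) \<and> -1 < (tR + r)/2 \<and> (tR + r)/2 < 0"
    using a1 a2 r2 unfolding is_eig_def by (simp add: power2_eq_square field_simps)
  have eu: "is_eig tR dR ((tR - r)/2) \<and> (tR - r)/2 < -1"
    using a3 r2 unfolding is_eig_def by (simp add: power2_eq_square field_simps)
  show "\<exists>!l. is_eig tR dR l \<and> -1 < l \<and> l < 0"
  proof
    show "is_eig tR dR ((tR + r)/2) \<and> -1 < (tR + r)/2 \<and> (tR + r)/2 < 0" by (rule es)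
    fix l assume l: "is_eig tR dR l \<and> -1 < l \<and> l < 0"
    show "l = (tR + r)/2"
    proof (rule ccontr)
      assume ne: "l \<noteq> (tR + r)/2"
      from roots_sum[of tR dR l "(tR + r)/2"] l es ne
      have "tR = l + (tR+r)/2 \<and> dR = l * ((tR+r)/2)" by blast
      hence "(1 + l) * (1 + (tR+r)/2) = 1 + tR + dR" by (intro prod_help(2)) auto
      moreover have "(1 + l) * (1 + (tR+r)/2) > 0" using l es by (intro mult_pos_pos) (auto simp: field_simps)
      ultimately show False using assms by linarith
    qed
  qed
  show "\<exists>!l. is_eig tR dR l \<and> l < -1"
  proof
    show "is_eig tR dR ((tR - r)/2) \<and> (tR - r)/2 < -1" by (rule eu)
    fix l assume l: "is_eig tR dR l \<and> l < -1"
    show "l = (tR - r)/2"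
    proof (rule ccontr)
      assume ne: "l \<noteq> (tR - r)/2"
      from roots_sum[of tR dR l "(tR - r)/2"] l eu ne
      have "tR = l + (tR-r)/2 \<and> dR = l * ((tR-r)/2)" by blast
      hence "(1 + l) * (1 + (tR-r)/2) = 1 + tR + dR" by (intro prod_help(2)) auto
      moreover have "(1 + l) * (1 + (tR-r)/2) > 0" using l eu
        by (intro mult_neg_neg) (auto simp: field_simps)
      ultimately show False using assms by linarith
    qed
  qed
qed


lemma key:
  fixes a s u :: real
  assumes "0<a" "a<1" "-1<s" "s<0" "u < -1" "a - s < 1"
  shows "-(s*u)/((a-s-u)*(1-a)) > -u/(u-1)"
proof -
  define P where "P = (a-s-u)*(1-a)"
  have P: "P > 0" unfolding P_def using assms by (intro mult_pos_pos) auto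
  have Q: "1 - u > 0" using assms by auto
  have pos: "(-u*(a-u)*(1-a+s)) > 0" using assms by (intro mult_pos_pos) auto
  have num: "(-(s*u))*(1-u) - u*P = -u*(a-u)*(1-a+s)" unfolding P_def by (simp add: algebra_simps)
  have lt: "u*P < (-(s*u))*(1-u)" using num pos by linarith
  have e1: "-u/(u-1) = (u*P)/((1-u)*P)" using P Q by (simp add: field_simps)
  have e2: "-(s*u)/P = ((-(s*u))*(1-u))/((1-u)*P)" using P Q by (simp add: field_simps)
  have "(u*P)/((1-u)*P) < ((-(s*u))*(1-u))/((1-u)*P)"
    using lt P Q by (intro divide_strict_right_mono) auto
  thus ?thesis using e1 e2 unfolding P_def by simp
qed

theorem lemma3p2:
  fixes xi :: "real \<times> real \<times> real \<times> real"
  assumes "xi \<in> Phi"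
    and "lamLs xi + \<bar>lamRs xi\<bar> < 1"
  shows "snd (ptU xi) > snd (ptV xi)"
proof -
  obtain tL dL tR dR where xi: "xi = (tL,dL,tR,dR)" by (cases xi) auto
  have c: "tL > dL + 1" "dL > 0" "tR < -(dR+1)" "dR > 0" using assms(1) xi by (auto simp: Phi_def)
  define a where "a = lamLs xi"
  define s where "s = lamRs xi"
  define u where "u = lamRu xi"
  have ha: "is_eig tL dL a \<and> 0 < a \<and> a < 1"
    unfolding a_def lamLs_def xi using theI'[OF L_ex[OF c(1,2)]] by simp
  have hs: "is_eig tR dR s \<and> -1 < s \<and> s < 0"
    unfolding s_def lamRs_def xi using theI'[OF R_ex(1)[OF c(3,4)]] by simp
  have hu: "is_eig tR dR u \<and> u < -1"
    unfolding u_def lamRu_def xi using theI'[OF R_ex(2)[OF c(3,4)]] by simp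
  have su: "tR = s + u \<and> dR = s * u" using roots_sum[of tR dR s u] hs hu by auto
  have as: "a - s < 1" using assms(2) hs unfolding a_def s_def by simp
  define d where "d = 1 / (1 - a)"
  have d1: "d > 1" using ha unfolding d_def by (simp add: field_simps)
  have pD: "ptD xi = (d, 0)" unfolding ptD_def d_def a_def by simp
  define X where "X = tR * d + 1"
  have F: "bcnf xi (d,0) = (X, - dR * d)" unfolding bcnf_def xi X_def using d1 by simp
  have Xneg: "X < 0"
  proof -
    have "tR * d < -1 * d" using c d1 by (intro mult_strict_right_mono) auto
    thus ?thesis unfolding X_def using d1 by simp
  qed
  define t0 where "t0 = d / (d - X)"
  define Y where "Y = t0 * (- dR * d)"
  have t0r: "0 \<le> t0" "t0 \<le> 1" using Xneg d1 unfolding t0_def by (auto simp: field_simps)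
  have fst0: "(1 - t0) * d + t0 * X = 0" using Xneg d1 unfolding t0_def by (simp add: field_simps)
  have U: "ptU xi = (0, Y)"
    unfolding ptU_def pD F
  proof (rule the_equality)
    show "(0, Y) \<in> closed_segment (d, 0) (X, - dR * d) \<and> fst (0::real, Y) = 0"
      unfolding closed_segment_def using t0r fst0
      by (auto intro!: exI[of _ t0] simp: Y_def)
    fix p :: "real \<times> real"
    assume p: "p \<in> closed_segment (d, 0) (X, - dR * d) \<and> fst p = 0"
    then obtain t where t: "p = (1 - t) *\<^sub>R (d, 0) + t *\<^sub>R (X, - dR * d)"
      unfolding closed_segment_def by auto
    have "(1 - t) * d + t * X = 0" using p t by simp
    hence "t = t0" using Xneg d1 unfolding t0_def by (simp add: field_simps)
    thus "p = (0, Y)" using t fst0 unfolding Y_def by simp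
  qed
  have Yform: "Y = -(s*u)/((a-s-u)*(1-a))"
  proof -
    have ne: "1 - a \<noteq> 0" "a - s - u \<noteq> 0" using ha hs hu by auto
    have "d - X = (a - s - u) / (1 - a)" unfolding X_def d_def using su ne by (simp add: field_simps)
    hence t0e: "t0 = 1 / (a - s - u)" unfolding t0_def d_def using ne by (simp add: field_simps)
    have "Y = (1 / (a - s - u)) * (- (s * u) * (1 / (1 - a)))" unfolding Y_def t0e d_def using su by simp
    also have "\<dots> = -(s*u)/((a-s-u)*(1-a))" by simp
    finally show ?thesis .
  qed
  have "snd (ptV xi) = -u/(u-1)" unfolding ptV_def u_def by simp
  moreover have "snd (ptU xi) = Y" using U by simp
  ultimately show ?thesis using key[of a s u] ha hs hu as Yform by simp
qed

end
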